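(* Assume GCH. Let $\lambda<\kappa$ be infinite cardinals with $\mathrm{cf}(\kappa)\notin\{\mu^+ : \mathrm{cf}(\mu)=\omega\}$. Then every $(\lambda,\kappa)$-graph contains an $(\aleph_0,\kappa)$-subgraph, or otherwise a collection of pairwise disjoint $(\aleph_0,\kappa_i)$-subgraphs, $i<\mathrm{cf}(\kappa)$, where $\{\kappa_i : i<\mathrm{cf}(\kappa)\}$ is cofinal in $\kappa$.
   Context: For infinite cardinals $\lambda<\kappa$, a $(\lambda,\kappa)$-graph is a bipartite graph with bipartition $(A,B)$, $|A|=\lambda$, $|B|=\kappa$, in which every vertex $b\in B$ has infinitely many neighbours in $A$. An $(\aleph_0,\nu)$-subgraph of such a graph is a subgraph with bipartition $(C,D)$, $C\subseteq A$, $D\subseteq B$, which is itself an $(\aleph_0,\nu)$-graph. *)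

theory Defs
  imports Main
begin

unbundle cardinal_syntax


text \<open>Cardinals are represented by sets via the BNF cardinal library of Main:
  the cardinal of a set X is the canonical cardinal well-order card_of X.\<close>

definition GCH_on :: "'a itself \<Rightarrow> bool" where
  "GCH_on _ \<longleftrightarrow> (\<forall>X::'a set. infinite X \<longrightarrow> (card_of (Pow X)) =o cardSuc (card_of (X)))"

definition cofinal_in :: "'a rel \<Rightarrow> 'a set \<Rightarrow> bool" where
  "cofinal_in r S \<longleftrightarrow> S \<subseteq> Field r \<and> (\<forall>a\<in>Field r. \<exists>b\<in>S. (a, b) \<in> r)"

text \<open>is_cf X Y: the cardinality of Y is the cofinality of the cardinal (card_of (X)),
  i.e. the least cardinality of a cofinal subset of the initial ordinal (card_of (X)).\<close>
definition is_cf :: "'a set \<Rightarrow> 'c set \<Rightarrow> bool" where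
  "is_cf X Y \<longleftrightarrow>
     (\<exists>S. cofinal_in (card_of (X)) S \<and> (card_of (Y)) =o (card_of (S))) \<and>
     (\<forall>S. cofinal_in (card_of (X)) S \<longrightarrow> (card_of (Y)) \<le>o (card_of (S)))"

text \<open>(lambda,kappa)-graph with bipartition (A,B) and edge set E, where lambda = (card_of (A)),
  kappa = (card_of (B)): lambda < kappa infinite, every b in B has infinitely many neighbours in A.\<close>
definition lk_graph :: "'a set \<Rightarrow> 'b set \<Rightarrow> ('a \<times> 'b) set \<Rightarrow> bool" where
  "lk_graph A B E \<longleftrightarrow> infinite A \<and> (card_of (A)) <o (card_of (B)) \<and> E \<subseteq> A \<times> B \<and>
     (\<forall>b\<in>B. infinite {a\<in>A. (a, b) \<in> E})"

definition aleph0_subgraph :: "'a set \<Rightarrow> 'b set \<Rightarrow> ('a \<times> 'b) set \<Rightarrow> 'a set \<Rightarrow> 'b set \<Rightarrow> bool" where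
  "aleph0_subgraph A B E C D \<longleftrightarrow> C \<subseteq> A \<and> D \<subseteq> B \<and>
     (card_of (C)) =o (card_of (UNIV :: nat set)) \<and> lk_graph C D (E \<inter> (C \<times> D))"

end

theory Submission
  imports Defs "HOL-Library.Countable_Set"
begin

unbundle cardinal_syntax


lemma fin_less: "finite A \<Longrightarrow> infinite B \<Longrightarrow> |A| <o |B|"
  by (metis card_of_Well_order Field_card_of finite_ordLess_infinite)

lemma card_refl: "(a::'a) \<in> X \<Longrightarrow> (a,a) \<in> |X|"
  using wo_rel.REFL[of "|X|"] card_of_Well_order[of X] by (auto simp: wo_rel_def refl_on_def Field_card_of)

lemma card_trans: "(a,b) \<in> |X| \<Longrightarrow> (b,c) \<in> |X| \<Longrightarrow> (a,c) \<in> |X|"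
  using wo_rel.TRANS[of "|X|"] card_of_Well_order[of X] by (auto simp: wo_rel_def trans_def)

lemma card_total: "a \<in> X \<Longrightarrow> b \<in> X \<Longrightarrow> (a,b) \<in> |X| \<or> (b,a) \<in> |X|"
  using wo_rel.TOTALS[of "|X|"] card_of_Well_order[of X] by (auto simp: wo_rel_def Field_card_of)

lemma card_antisym: "(a,b) \<in> |X| \<Longrightarrow> (b,a) \<in> |X| \<Longrightarrow> a = b"
  using wo_rel.ANTISYM[of "|X|"] card_of_Well_order[of X] by (auto simp: wo_rel_def antisym_def)

lemma card_field: "(a,b) \<in> |X| \<Longrightarrow> a \<in> X \<and> b \<in> X"
  using FieldI1 FieldI2 Field_card_of by metis

lemma times_less:
  assumes INF: "\<not>finite C" and LESS1: "|A| <o |C|" and LESS2: "|B| <o |C|"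
  shows "|A \<times> B| <o |C|"
proof(cases "A = {} \<or> B = {}")
  case True
  hence "A \<times> B = {}" by blast
  moreover have "C \<noteq> {}" using INF by auto
  ultimately show ?thesis using fin_less[of "A \<times> B" C] INF by (metis finite.emptyI)
next
  case Case2: False
  {assume *: "|C| \<le>o |A \<times> B|"
    hence "\<not>finite (A \<times> B)" using INF card_of_ordLeq_finite by blast
    hence 1: "\<not>finite A \<or> \<not>finite B" using finite_cartesian_product by blast
    {assume Case21: "|A| \<le>o |B|"
      hence "\<not>finite B" using 1 card_of_ordLeq_finite by blast
      hence "|A \<times> B| =o |B|" using Case2 Case21
        by (auto simp: card_of_Times_infinite)
      hence False using LESS2 not_ordLess_ordLeq * ordLeq_ordIso_trans by blast
    }
    moreover
    {assume Case22: "|B| \<le>o |A|"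
      hence "\<not>finite A" using 1 card_of_ordLeq_finite by blast
      hence "|A \<times> B| =o |A|" using Case2 Case22
        by (auto simp: card_of_Times_infinite)
      hence False using LESS1 not_ordLess_ordLeq * ordLeq_ordIso_trans by blast
    }
    ultimately have False using ordLeq_total card_of_Well_order[of A]
        card_of_Well_order[of B] by blast
  }
  thus ?thesis using ordLess_or_ordLeq[of "|A \<times> B|" "|C|"]
      card_of_Well_order[of "A \<times> B"] card_of_Well_order[of "C"] by auto
qed

lemma under_less:
  assumes "infinite X" "a \<in> X"
  shows "|under |X| a| <o |X|"
proof -
  have u: "under |X| a = insert a (underS |X| a)"
    using assms card_refl[of a X] card_field
    unfolding under_def underS_def by auto
  have l: "|underS |X| a| <o |X|" using card_of_underS[OF card_of_Card_order, of a X] assms by (simp add: Field_card_of)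
  show ?thesis
  proof (cases "finite (underS |X| a)")
    case True
    then show ?thesis by (metis u fin_less finite_insert assms(1))
  next
    case False
    have "|{a}| <o |X|" using fin_less assms(1) by blast
    then show ?thesis using u l card_of_Un_ordLess_infinite[OF assms(1)] by (metis insert_is_Un)
  qed
qed

lemma wo_max:
  assumes "Well_order r" "finite S" "S \<noteq> {}" "S \<subseteq> Field r"
  shows "\<exists>m\<in>S. \<forall>s\<in>S. (s,m)\<in>r"
  using assms(2,3,4)
proof (induction S rule: finite_ne_induct)
  case (singleton x)
  then show ?case using assms(1) wo_rel.REFL[of r] by (auto simp: wo_rel_def refl_on_def)
next
  case (insert x F)
  then obtain m where m: "m \<in> F" "\<forall>s\<in>F. (s,m)\<in>r" by auto
  have tot: "(x,m)\<in>r \<or> (m,x)\<in>r" using assms(1) insert m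
    unfolding well_order_on_def linear_order_on_def total_on_def
    by (metis insert_subset partial_order_on_def preorder_on_def refl_onD subsetD)
  show ?case
  proof (cases "(x,m)\<in>r")
    case True then show ?thesis using m by auto
  next
    case False
    then have "(m,x)\<in>r" using tot by auto
    then show ?thesis using m assms(1)
      unfolding well_order_on_def linear_order_on_def partial_order_on_def preorder_on_def trans_def
      by (metis insert_iff refl_onD insert.prems subsetD insertI1)
  qed
qed

lemma nomax:
  assumes "infinite X" "cofinal_in |X| S"
  shows "infinite S"
proof
  assume fin: "finite S"
  have SX: "S \<subseteq> X" and cof: "\<forall>a\<in>X. \<exists>b\<in>S. (a,b) \<in> |X|"
    using assms(2) by (auto simp: cofinal_in_def Field_card_of)
  have "X \<noteq> {}" using assms(1) by auto
  then have "S \<noteq> {}" using cof by blast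
  then have "\<exists>m\<in>S. \<forall>s\<in>S. (s,m) \<in> |X|"
    using wo_max[of "|X|" S] card_of_Well_order[of X] fin SX by (simp add: Field_card_of)
  then obtain m where m: "m \<in> S" "\<forall>s\<in>S. (s,m) \<in> |X|" by blast
  have "X \<subseteq> under |X| m"
  proof
    fix a assume "a \<in> X"
    then obtain b where "b \<in> S" "(a,b) \<in> |X|" using cof by blast
    then have "(a,m) \<in> |X|" using m(2) card_trans[of a b X m] by blast
    then show "a \<in> under |X| m" unfolding under_def by simp
  qed
  then have 1: "|X| \<le>o |under |X| m|" by (rule card_of_mono1)
  have "m \<in> X" using m(1) SX by blast
  then have "|under |X| m| <o |X|" by (rule under_less[OF assms(1)])
  with 1 show False using not_ordLess_ordLeq by blast
qed

lemma cf_nat_intro: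
  assumes "infinite M" "countable S" "cofinal_in |M| S"
  shows "is_cf M (UNIV::nat set)"
  unfolding is_cf_def
proof (intro conjI allI impI)
  have "infinite S" using nomax assms by blast
  then obtain e :: "_ \<Rightarrow> nat" where "bij_betw e S UNIV" using countableE_infinite assms(2) by blast
  then have "|S| =o |UNIV::nat set|" using card_of_ordIso by blast
  then show "\<exists>S. cofinal_in |M| S \<and> |UNIV::nat set| =o |S|"
    using assms(3) ordIso_symmetric by blast
next
  fix S' assume "cofinal_in |M| S'"
  then have "infinite S'" using nomax assms(1) by blast
  then show "|UNIV::nat set| \<le>o |S'|" using infinite_iff_card_of_nat by blast
qed

lemma bounded_countable:
  fixes M :: "'b set" and X :: "'a set"
  assumes "infinite X" "|M| =o |X|" "\<not> is_cf M (UNIV::nat set)" "S \<subseteq> X" "countable S"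
  shows "\<exists>a\<in>X. S \<subseteq> under |X| a"
proof (rule ccontr)
  assume neg: "\<not> (\<exists>a\<in>X. S \<subseteq> under |X| a)"
  then have cof: "cofinal_in |X| S"
    unfolding cofinal_in_def Field_card_of
  proof (intro conjI ballI)
    show "S \<subseteq> X" by fact
  next
    fix a assume a: "a \<in> X"
    then obtain b where "b \<in> S" "(b,a) \<notin> |X|" using neg unfolding under_def by blast
    then show "\<exists>b\<in>S. (a, b) \<in> |X|" using card_total[of a X b] a assms(4) by blast
  qed
  have "(card_of X, card_of M) \<in> ordIso" using ordIso_symmetric[OF assms(2)] .
  then obtain f where f: "iso |X| |M| f" unfolding ordIso_def by auto
  have FM: "f ` X = M" using iso_Field[OF f] by (simp add: Field_card_of)
  have "cofinal_in |M| (f ` S)"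
    unfolding cofinal_in_def
  proof (intro conjI ballI)
    show "f ` S \<subseteq> Field |M|" using FM assms(4) by (auto simp: Field_card_of)
  next
    fix a' assume "a' \<in> Field |M|"
    then obtain a where a: "a \<in> X" "a' = f a" using FM by (auto simp: Field_card_of)
    then obtain b where "b \<in> S" "(a,b) \<in> |X|" using cof by (auto simp: cofinal_in_def Field_card_of)
    then show "\<exists>b'\<in>f ` S. (a', b') \<in> |M|" using iso_forward[OF _ f] a by blast
  qed
  moreover have "infinite M"
  proof -
    obtain g where "bij_betw g M X" using assms(2) card_of_ordIso by blast
    then show ?thesis using assms(1) bij_betw_finite by blast
  qed
  ultimately have "is_cf M (UNIV::nat set)" using cf_nat_intro assms(5) by blast
  then show False using assms(3) by blast
qed

lemma gch_pow:
  fixes X :: "'a set"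
  assumes "GCH_on TYPE('a)" "infinite X"
  shows "|Pow X| =o cardSuc |X|"
  using assms unfolding GCH_on_def by blast

lemma pow_le:
  fixes X Y :: "'a set"
  assumes "GCH_on TYPE('a)" "infinite X" "|Y| <o |X|"
  shows "|Pow Y| \<le>o |X|"
proof (cases "finite Y")
  case True
  then show ?thesis using fin_less[of "Pow Y" X] assms(2) ordLess_imp_ordLeq by blast
next
  case False
  have "cardSuc |Y| \<le>o |X|" using cardSuc_least[OF card_of_Card_order card_of_Card_order assms(3)] .
  then show ?thesis using gch_pow[OF assms(1) False] ordIso_ordLeq_trans by blast
qed

lemma count_less:
  fixes X :: "'a set" and cfI :: "'b set"
  assumes gch: "GCH_on TYPE('a)"
   and cf_cond: "\<not> (\<exists>M::'b set. cardSuc |M| =o |cfI| \<and> is_cf M (UNIV::nat set))"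
   and inf: "infinite cfI"
   and lt: "|X| <o |cfI|"
  shows "|{S. S \<subseteq> X \<and> countable S \<and> infinite S}| <o |cfI|"
proof (cases "finite X")
  case True
  then have "{S. S \<subseteq> X \<and> countable S \<and> infinite S} = {}" using finite_subset by blast
  then show ?thesis using fin_less inf by (metis finite.emptyI)
next
  case infX: False
  let ?Q = "{S. S \<subseteq> X \<and> countable S \<and> infinite S}"
  show ?thesis
  proof (cases "|Pow X| <o |cfI|")
    case True
    have "?Q \<subseteq> Pow X" by blast
    then show ?thesis using ordLeq_ordLess_trans[OF card_of_mono1 True] by blast
  next
    case False
    then have 1: "|cfI| \<le>o |Pow X|"
      using not_ordLess_iff_ordLeq[OF card_of_Well_order[of cfI] card_of_Well_order[of "Pow X"]] by simp
    have 2: "|Pow X| =o cardSuc |X|" using gch_pow[OF gch infX] .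
    have 3: "cardSuc |X| \<le>o |cfI|" using cardSuc_least[OF card_of_Card_order card_of_Card_order lt] .
    have eq: "cardSuc |X| =o |cfI|"
      unfolding ordIso_iff_ordLeq using 3 ordLeq_ordIso_trans[OF 1 2] by blast
    obtain h where h: "inj_on h X" "h ` X \<subseteq> cfI"
      using card_of_ordLeq[of X cfI] ordLess_imp_ordLeq[OF lt] by auto
    define M where "M = h ` X"
    have XM: "|X| =o |M|" unfolding M_def using inj_on_imp_bij_betw[OF h(1)] card_of_ordIso[of X "h ` X"] by auto
    have "cardSuc |M| =o cardSuc |X|"
      using cardSuc_invar_ordIso[OF card_of_Card_order card_of_Card_order, of M X] ordIso_symmetric[OF XM] by simp
    then have "cardSuc |M| =o |cfI|" using ordIso_transitive eq by blast
    then have ncf: "\<not> is_cf M (UNIV::nat set)" using cf_cond by blast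
    have sub: "?Q \<subseteq> (\<Union>a\<in>X. Pow (under |X| a))"
    proof
      fix S assume "S \<in> ?Q"
      then have "S \<subseteq> X" "countable S" by auto
      then obtain a where "a \<in> X" "S \<subseteq> under |X| a"
        using bounded_countable[OF infX ordIso_symmetric[OF XM] ncf] by blast
      then show "S \<in> (\<Union>a\<in>X. Pow (under |X| a))" by blast
    qed
    have "|SIGMA a:X. Pow (under |X| a)| \<le>o |X|"
    proof (rule card_of_Sigma_ordLeq_infinite[OF infX])
      show "|X| \<le>o |X|" by (rule ordLeq_refl[OF card_of_Card_order])
      show "\<forall>a\<in>X. |Pow (under |X| a)| \<le>o |X|"
        using pow_le[OF gch infX] under_less[OF infX] by blast
    qed
    then have "|\<Union>a\<in>X. Pow (under |X| a)| \<le>o |X|"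
      using ordLeq_transitive[OF card_of_UNION_Sigma] by blast
    then have "|?Q| \<le>o |X|" using ordLeq_transitive[OF card_of_mono1[OF sub]] by blast
    then show ?thesis using ordLeq_ordLess_trans[OF _ lt] by blast
  qed
qed



lemma below_elem:
  fixes Y :: "'c set" and B :: "'b set"
  assumes "|Y| <o |B|"
  shows "\<exists>a\<in>B. |Y| \<le>o |underS |B| a|"
proof -
  obtain a where a: "a \<in> Field |B|" "|Y| =o Restr |B| (underS |B| a)"
    using ordLess_iff_ordIso_Restr[OF card_of_Well_order[of B] card_of_Well_order[of Y]] assms by blast
  have "(card_of Y, Restr |B| (underS |B| a)) \<in> ordIso" using a(2) .
  then obtain g where g: "iso |Y| (Restr |B| (underS |B| a)) g" unfolding ordIso_def by blast
  have R: "Refl |B|" using card_of_Well_order[of B]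
    unfolding well_order_on_def linear_order_on_def partial_order_on_def preorder_on_def by blast
  have "underS |B| a \<subseteq> Field |B|" unfolding Field_card_of
  proof
    fix x assume "x \<in> underS |B| a"
    then have "(x,a) \<in> |B|" unfolding underS_def by simp
    then show "x \<in> B" using card_field[of x a B] by simp
  qed
  then have "Field (Restr |B| (underS |B| a)) = underS |B| a" by (rule Refl_Field_Restr2[OF R])
  moreover have "bij_betw g (Field (card_of Y)) (Field (Restr |B| (underS |B| a)))" using g unfolding iso_def by (rule conjunct2)
  ultimately have "bij_betw g Y (underS |B| a)" by (simp only: Field_card_of)
  then have "|Y| =o |underS |B| a|" using card_of_ordIso by blast
  then have "|Y| \<le>o |underS |B| a|" by (rule ordIso_imp_ordLeq)
  moreover have "a \<in> B" using a(1) by (simp only: Field_card_of)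
  ultimately show ?thesis by blast
qed

lemma cf_le:
  assumes "is_cf B cfI"
  shows "|cfI| \<le>o |B|"
proof -
  have "cofinal_in |B| B" unfolding cofinal_in_def Field_card_of by (metis card_refl order_refl)
  then show ?thesis using assms unfolding is_cf_def by blast
qed

lemma union_less:
  fixes B :: "'b set" and cfI :: "'c set" and I :: "'i set" and F :: "'i \<Rightarrow> 'b set"
  assumes cf: "is_cf B cfI" and infB: "infinite B"
   and I: "|I| <o |cfI|" and F: "\<forall>i\<in>I. |F i| <o |B|"
  shows "|\<Union>i\<in>I. F i| <o |B|"
proof -
  have "\<forall>i\<in>I. \<exists>a. a \<in> B \<and> |F i| \<le>o |underS |B| a|"
  proof
    fix i assume "i \<in> I"
    then have "|F i| <o |B|" using F by blast
    from below_elem[OF this] show "\<exists>a. a \<in> B \<and> |F i| \<le>o |underS |B| a|" by blast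
  qed
  from bchoice[OF this] obtain \<alpha> where \<alpha>: "\<forall>i\<in>I. \<alpha> i \<in> B \<and> |F i| \<le>o |underS |B| (\<alpha> i)|" by blast
  have "|\<alpha> ` I| <o |cfI|" using ordLeq_ordLess_trans[OF card_of_image I] .
  then have "\<not> cofinal_in |B| (\<alpha> ` I)"
    using cf not_ordLess_ordLeq[of "|\<alpha> ` I|" "|cfI|"] unfolding is_cf_def by blast
  moreover have "\<alpha> ` I \<subseteq> Field |B|" using \<alpha> by (auto simp: Field_card_of)
  ultimately obtain \<beta> where \<beta>: "\<beta> \<in> B" "\<forall>i\<in>I. (\<beta>, \<alpha> i) \<notin> |B|"
    unfolding cofinal_in_def by (auto simp: Field_card_of)
  have "\<forall>i\<in>I. |F i| \<le>o |underS |B| \<beta>|"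
  proof
    fix i assume i: "i \<in> I"
    have ai: "\<alpha> i \<in> B" "(\<beta>, \<alpha> i) \<notin> |B|" using \<alpha> \<beta> i by auto
    then have "(\<alpha> i, \<beta>) \<in> |B|" using card_total[of "\<alpha> i" B \<beta>] \<beta>(1) by blast
    have "underS |B| (\<alpha> i) \<subseteq> underS |B| \<beta>"
    proof
      fix x assume "x \<in> underS |B| (\<alpha> i)"
      then have x: "x \<noteq> \<alpha> i" "(x, \<alpha> i) \<in> |B|" unfolding underS_def by auto
      have "(x, \<beta>) \<in> |B|" using card_trans[OF x(2) \<open>(\<alpha> i, \<beta>) \<in> |B|\<close>] .
      moreover have "x \<noteq> \<beta>" using x ai(2) by auto
      ultimately show "x \<in> underS |B| \<beta>" unfolding underS_def by auto
    qed
    then show "|F i| \<le>o |underS |B| \<beta>|"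
      using ordLeq_transitive[OF conjunct2[OF \<alpha>[rule_format, OF i]] card_of_mono1] by blast
  qed
  then have 1: "|SIGMA i:I. F i| \<le>o |I \<times> underS |B| \<beta>|"
    using card_of_Sigma_mono1[of I F "\<lambda>_. underS |B| \<beta>"] by simp
  have 2: "|I \<times> underS |B| \<beta>| <o |B|"
  proof (rule times_less[OF infB])
    show "|I| <o |B|" using ordLess_ordLeq_trans[OF I cf_le[OF cf]] .
    show "|underS |B| \<beta>| <o |B|"
      using card_of_underS[OF card_of_Card_order, of \<beta> B] \<beta>(1) by (simp add: Field_card_of)
  qed
  show ?thesis using ordLeq_ordLess_trans[OF ordLeq_transitive[OF card_of_UNION_Sigma 1] 2] .
qed

lemma ctbl_le: "countable T \<Longrightarrow> |T| \<le>o |UNIV::nat set|"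
  unfolding countable_def using card_of_ordLeq by blast

lemma ctbl_eq: "countable T \<Longrightarrow> infinite T \<Longrightarrow> |T| =o |UNIV::nat set|"
  using countableE_infinite card_of_ordIso by metis

lemma eq_ctbl: "|T| =o |UNIV::nat set| \<Longrightarrow> countable T"
proof -
  assume "|T| =o |UNIV::nat set|"
  then obtain h where "bij_betw h T (UNIV::nat set)" using card_of_ordIso by blast
  then show "countable T" unfolding countable_def bij_betw_def by blast
qed

lemma underS_mono:
  assumes "(a,s) \<in> |B|"
  shows "underS |B| a \<subseteq> underS |B| s"
proof
  fix x assume "x \<in> underS |B| a"
  then have x: "x \<noteq> a" "(x, a) \<in> |B|" unfolding underS_def by auto
  have "(x, s) \<in> |B|" using card_trans[OF x(2) assms] .
  moreover have "x \<noteq> s"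
  proof
    assume "x = s"
    then have "x = a" using card_antisym[of x a B] x(2) assms by simp
    then show False using x(1) by simp
  qed
  ultimately show "x \<in> underS |B| s" unfolding underS_def by auto
qed

lemma succ_regular:
  fixes X :: "'a set" and B :: "'b set" and cfI :: "'c set"
  assumes cf: "is_cf B cfI" and infX: "infinite X" and eq: "|B| =o cardSuc |X|"
  shows "\<not> |cfI| <o |B|"
proof
  assume lt: "|cfI| <o |B|"
  obtain S where S: "cofinal_in |B| S" "|cfI| =o |S|" using cf unfolding is_cf_def by blast
  have SB: "|S| <o cardSuc |X|"
    using ordLess_ordIso_trans[OF ordIso_ordLess_trans[OF ordIso_symmetric[OF S(2)] lt] eq] .
  then have SX: "|S| \<le>o |X|"
    using cardSuc_ordLeq_ordLess[OF card_of_Card_order card_of_Card_order] by blast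
  have XB: "|X| <o |B|"
    using ordLess_ordIso_trans[OF cardSuc_greater[OF card_of_Card_order] ordIso_symmetric[OF eq]] .
  then have infB: "infinite B" using infX card_of_ordLeq_finite ordLess_imp_ordLeq by blast
  have sub: "B \<subseteq> (\<Union>s\<in>S. under |B| s)"
  proof
    fix b assume "b \<in> B"
    then obtain s where "s \<in> S" "(b,s) \<in> |B|" using S(1) unfolding cofinal_in_def Field_card_of by blast
    then show "b \<in> (\<Union>s\<in>S. under |B| s)" unfolding under_def by blast
  qed
  have "\<forall>s\<in>S. |under |B| s| \<le>o |X|"
  proof
    fix s assume "s \<in> S"
    then have "s \<in> B" using S(1) unfolding cofinal_in_def Field_card_of by blast
    then have "|under |B| s| <o |B|" by (rule under_less[OF infB])
    then have "|under |B| s| <o cardSuc |X|" using ordLess_ordIso_trans eq by blast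
    then show "|under |B| s| \<le>o |X|"
      using cardSuc_ordLeq_ordLess[OF card_of_Card_order card_of_Card_order] by blast
  qed
  then have "|SIGMA s:S. under |B| s| \<le>o |X|" using card_of_Sigma_ordLeq_infinite[OF infX SX] by blast
  then have "|B| \<le>o |X|"
    using ordLeq_transitive[OF card_of_mono1[OF sub] ordLeq_transitive[OF card_of_UNION_Sigma]] by blast
  then show False using XB not_ordLess_ordLeq by blast
qed

theorem lemma4p6:
  fixes A :: "'a set" and B :: "'b set" and E :: "('a \<times> 'b) set"
    and cfI :: "'b set"
  assumes gch_a: "GCH_on TYPE('a)"
    and gch_b: "GCH_on TYPE('b)"
    and graph: "lk_graph A B E"
    and cf: "is_cf B cfI"
    and cf_cond: "\<not> (\<exists>M::'b set. cardSuc (card_of (M)) =o (card_of (cfI)) \<and> is_cf M (UNIV :: nat set))"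
  shows "(\<exists>C D. aleph0_subgraph A B E C D \<and> (card_of (D)) =o (card_of (B))) \<or>
         (\<exists>(I::'b set) (C::'b \<Rightarrow> 'a set) (D::'b \<Rightarrow> 'b set).
            (card_of (I)) =o (card_of (cfI)) \<and>
            (\<forall>i\<in>I. aleph0_subgraph A B E (C i) (D i)) \<and>
            (\<forall>i\<in>I. \<forall>j\<in>I. i \<noteq> j \<longrightarrow> C i \<inter> C j = {} \<and> D i \<inter> D j = {}) \<and>
            (\<forall>X\<subseteq>B. (card_of (X)) <o (card_of (B)) \<longrightarrow> (\<exists>i\<in>I. (card_of (X)) <o (card_of (D i)))))"
proof (cases "\<exists>C D. aleph0_subgraph A B E C D \<and> (card_of (D)) =o (card_of (B))")
  case True
  then show ?thesis by blast
next
  case nfirst: False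
  have infA: "infinite A" and AB: "|A| <o |B|" and EAB: "E \<subseteq> A \<times> B"
    and nb: "\<forall>b\<in>B. infinite {a\<in>A. (a, b) \<in> E}"
    using graph unfolding lk_graph_def by auto
  have infB: "infinite B" using card_of_ordLeq_finite[OF ordLess_imp_ordLeq[OF AB]] infA by blast
  have natA: "|UNIV::nat set| \<le>o |A|" using infA infinite_iff_card_of_nat by blast
  define G where "G T = {b\<in>B. infinite {a\<in>T. (a,b)\<in>E}}" for T
  have GB: "G T \<subseteq> B" for T unfolding G_def by blast
  have NF: "|G T| <o |B|" if T: "T \<subseteq> A" "countable T" "infinite T" for T
  proof (rule ccontr)
    assume "\<not> |G T| <o |B|"
    then have 1: "|B| \<le>o |G T|"
      using not_ordLess_iff_ordLeq[OF card_of_Well_order[of B] card_of_Well_order[of "G T"]] by blast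
    have 2: "|G T| \<le>o |B|" using card_of_mono1[OF GB] .
    have eqB: "|G T| =o |B|" unfolding ordIso_iff_ordLeq using 1 2 by blast
    have Tn: "|T| =o |UNIV::nat set|" using ctbl_eq T by blast
    have "|T| <o |B|" using ordLeq_ordLess_trans[OF ordIso_ordLeq_trans[OF Tn natA] AB] .
    then have lt: "|T| <o |G T|" using ordLess_ordIso_trans[OF _ ordIso_symmetric[OF eqB]] by blast
    have inf: "\<forall>b\<in>G T. infinite {a\<in>T. (a, b) \<in> E \<inter> T \<times> G T}"
    proof
      fix b assume b: "b \<in> G T"
      then have "{a\<in>T. (a, b) \<in> E \<inter> T \<times> G T} = {a\<in>T. (a,b)\<in>E}" by auto
      then show "infinite {a\<in>T. (a, b) \<in> E \<inter> T \<times> G T}" using b unfolding G_def by simp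
    qed
    have "aleph0_subgraph A B E T (G T)"
      unfolding aleph0_subgraph_def lk_graph_def using T Tn lt inf GB by blast
    then show False using nfirst eqB by blast
  qed
  have inG: "b \<in> G T" if "b \<in> B" "T \<subseteq> {a\<in>A. (a,b)\<in>E}" "infinite T" for b T
  proof -
    have "{a\<in>T. (a,b)\<in>E} = T" using that by blast
    then show ?thesis using that unfolding G_def by simp
  qed
  obtain S where S: "cofinal_in |B| S" "|cfI| =o |S|" using cf unfolding is_cf_def by blast
  have SB: "S \<subseteq> B" using S(1) unfolding cofinal_in_def Field_card_of by blast
  have infS: "infinite S" using nomax[OF infB S(1)] .
  obtain g where g: "bij_betw g cfI S" using S(2) card_of_ordIso by blast
  have infcfI: "infinite cfI" using g infS bij_betw_finite by blast
  have gB: "g j \<in> B" if "j \<in> cfI" for j using g that SB bij_betwE by blast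
  have sing: "|cfI| <o |B|"
  proof (rule ccontr)
    assume "\<not> |cfI| <o |B|"
    then have eq: "|cfI| =o |B|" using cf_le[OF cf] ordLeq_iff_ordLess_or_ordIso by blast
    let ?Q = "{T. T \<subseteq> A \<and> countable T \<and> infinite T}"
    have "|A| <o |cfI|" using ordLess_ordIso_trans[OF AB ordIso_symmetric[OF eq]] .
    then have Qlt: "|?Q| <o |cfI|" using count_less[OF gch_a cf_cond infcfI] by blast
    have sub: "B \<subseteq> (\<Union>T\<in>?Q. G T)"
    proof
      fix b assume b: "b \<in> B"
      then obtain T where "T \<subseteq> {a\<in>A. (a,b)\<in>E}" "countable T" "infinite T"
        using nb infinite_countable_subset' by blast
      then show "b \<in> (\<Union>T\<in>?Q. G T)" using inG[OF b] by blast
    qed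
    have ul: "|\<Union>T\<in>?Q. G T| <o |B|" using union_less[OF cf infB Qlt, of G] NF by blast
    show False using not_ordLess_ordLeq[OF ul] card_of_mono1[OF sub] by blast
  qed
  have PowA: "|Pow A| <o |B|"
  proof -
    have 1: "cardSuc |A| \<le>o |B|" using cardSuc_least[OF card_of_Card_order card_of_Card_order AB] .
    have 2: "\<not> |B| =o cardSuc |A|" using succ_regular[OF cf infA] sing by blast
    have "cardSuc |A| <o |B| \<or> cardSuc |A| =o |B|" using 1 ordLeq_iff_ordLess_or_ordIso by blast
    then have "cardSuc |A| <o |B|" using 2 ordIso_symmetric by blast
    then show ?thesis using ordIso_ordLess_trans[OF gch_pow[OF gch_a infA]] by blast
  qed
  have WO: "wo_rel |cfI|" using card_of_Well_order unfolding wo_rel_def by blast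
  define U where "U f j = (\<Union>i\<in>underS |cfI| j. fst (f i))" for f :: "'b \<Rightarrow> 'a set \<times> 'b set" and j
  define V where "V f j = (\<Union>i\<in>underS |cfI| j. snd (f i))" for f :: "'b \<Rightarrow> 'a set \<times> 'b set" and j
  define good where "good f j p \<longleftrightarrow> fst p \<subseteq> A - U f j \<and> snd p \<subseteq> B - V f j \<and>
      aleph0_subgraph A B E (fst p) (snd p) \<and> |underS |B| (g j)| <o |snd p| \<and>
      |A| <o |snd p| \<and> |snd p| <o |B|" for f j p
  define H where "H f j = (SOME p. good f j p)" for f j
  have adm: "wo_rel.adm_wo |cfI| H"
    unfolding wo_rel.adm_wo_def[OF WO]
  proof (intro allI impI)
    fix f f' :: "'b \<Rightarrow> 'a set \<times> 'b set" and x assume eq: "\<forall>y\<in>underS |cfI| x. f y = f' y"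
    then have "U f x = U f' x" "V f x = V f' x" unfolding U_def V_def by auto
    then show "H f x = H f' x" unfolding H_def good_def by simp
  qed
  define pc where "pc = wo_rel.worec |cfI| H"
  have fixp: "pc = H pc" unfolding pc_def using wo_rel.worec_fixpoint[OF WO adm] .
  have ex: "\<exists>p. good pc j p" if j: "j \<in> cfI" and prev: "\<forall>i\<in>underS |cfI| j. good pc i (pc i)" for j
  proof -
    let ?J = "underS |cfI| j"
    have J: "|?J| <o |cfI|" using card_of_underS[OF card_of_Card_order, of j cfI] j by (simp add: Field_card_of)
    have prevC: "fst (pc i) \<subseteq> A \<and> countable (fst (pc i))" if "i \<in> ?J" for i
      using prev that eq_ctbl unfolding good_def aleph0_subgraph_def by blast
    have prevD: "\<forall>i\<in>?J. |snd (pc i)| <o |B|" using prev unfolding good_def by blast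
    have UA: "U pc j \<subseteq> A" unfolding U_def using prevC by blast
    have Vlt: "|V pc j| <o |B|" unfolding V_def using union_less[OF cf infB J, of "\<lambda>i. snd (pc i)"] prevD by blast
    define B' where "B' = {b\<in>B. infinite {a\<in>U pc j. (a,b)\<in>E}}"
    have B'lt: "|B'| <o |B|"
    proof (cases "countable (U pc j)")
      case True
      show ?thesis
      proof (cases "finite (U pc j)")
        case True
        then have "B' = {}" unfolding B'_def by auto
        then show ?thesis using fin_less[OF finite.emptyI infB] by simp
      next
        case False
        then have "B' = G (U pc j)" unfolding B'_def G_def by simp
        then show ?thesis using NF[OF UA \<open>countable (U pc j)\<close> False] by simp
      qed
    next
      case False
      have infJ: "infinite ?J"
      proof
        assume "finite ?J"
        then have "countable (U pc j)" unfolding U_def using prevC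
          by (intro countable_UN) (auto intro: countable_finite)
        then show False using False by blast
      qed
      have "|U pc j| \<le>o |SIGMA i:?J. fst (pc i)|" unfolding U_def by (rule card_of_UNION_Sigma)
      note u1 = this
      have u2: "|SIGMA i:?J. fst (pc i)| \<le>o |SIGMA i:?J. (UNIV::nat set)|"
      proof (rule card_of_Sigma_mono1)
        show "\<forall>i\<in>?J. |fst (pc i)| \<le>o |UNIV::nat set|" using prevC ctbl_le by blast
      qed
      have natJ: "|UNIV::nat set| \<le>o |?J|" using infJ infinite_iff_card_of_nat by blast
      have u3: "|?J \<times> (UNIV::nat set)| =o |?J|"
        using card_of_Times_infinite[OF infJ UNIV_not_empty natJ] by (rule conjunct1)
      have "|U pc j| \<le>o |?J|" using ordLeq_ordIso_trans[OF ordLeq_transitive[OF u1 u2] u3] .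
      then have Ult: "|U pc j| <o |cfI|" using ordLeq_ordLess_trans[OF _ J] by blast
      let ?Q = "{T. T \<subseteq> U pc j \<and> countable T \<and> infinite T}"
      have Qlt: "|?Q| <o |cfI|" using count_less[OF gch_a cf_cond infcfI Ult] .
      have sub: "B' \<subseteq> (\<Union>T\<in>?Q. G T)"
      proof
        fix b assume b: "b \<in> B'"
        then obtain T where T: "T \<subseteq> {a\<in>U pc j. (a,b)\<in>E}" "countable T" "infinite T"
          unfolding B'_def using infinite_countable_subset' by blast
        have "b \<in> G T" using inG[of b T] T b UA unfolding B'_def by blast
        then show "b \<in> (\<Union>T\<in>?Q. G T)" using T by blast
      qed
      have "\<forall>T\<in>?Q. |G T| <o |B|" using NF UA by blast
      then have "|\<Union>T\<in>?Q. G T| <o |B|" using union_less[OF cf infB Qlt] by blast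
      then show ?thesis using card_of_mono1[OF sub] ordLeq_ordLess_trans by blast
    qed
    define R where "R = B - V pc j - B'"
    have Rnot: "\<not> |R| <o |B|"
    proof
      assume "|R| <o |B|"
      then have "|R \<union> V pc j| <o |B|" using card_of_Un_ordLess_infinite[OF infB _ Vlt] by blast
      then have "|(R \<union> V pc j) \<union> B'| <o |B|" using card_of_Un_ordLess_infinite[OF infB _ B'lt] by blast
      moreover have "B \<subseteq> (R \<union> V pc j) \<union> B'" unfolding R_def by blast
      ultimately show False using not_ordLess_ordLeq card_of_mono1[of B "(R \<union> V pc j) \<union> B'"] by blast
    qed
    have "\<forall>b\<in>R. \<exists>T. T \<subseteq> {a\<in>A. (a,b)\<in>E} - U pc j \<and> countable T \<and> infinite T"
    proof
      fix b assume b: "b \<in> R"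
      then have "b \<in> B" "finite {a\<in>U pc j. (a,b)\<in>E}" unfolding R_def B'_def by auto
      moreover have "{a\<in>A. (a,b)\<in>E} \<subseteq> ({a\<in>A. (a,b)\<in>E} - U pc j) \<union> {a\<in>U pc j. (a,b)\<in>E}" by blast
      ultimately have "infinite ({a\<in>A. (a,b)\<in>E} - U pc j)" using nb finite_subset by blast
      then show "\<exists>T. T \<subseteq> {a\<in>A. (a,b)\<in>E} - U pc j \<and> countable T \<and> infinite T"
        using infinite_countable_subset' by blast
    qed
    from bchoice[OF this] obtain N where N: "\<forall>b\<in>R. N b \<subseteq> {a\<in>A. (a,b)\<in>E} - U pc j \<and> countable (N b) \<and> infinite (N b)"
      by blast
    define W where "W = underS |B| (g j) <+> A"
    have gjlt: "|underS |B| (g j)| <o |B|"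
      using card_of_underS[OF card_of_Card_order, of "g j" B] gB[OF j] by (simp add: Field_card_of)
    have Wlt: "|W| <o |B|" unfolding W_def using card_of_Plus_ordLess_infinite[OF infB gjlt AB] .
    define fib where "fib T = {b\<in>R. N b = T}" for T
    have "\<exists>b0\<in>R. |W| <o |fib (N b0)|"
    proof (rule ccontr)
      assume nex: "\<not> (\<exists>b0\<in>R. card_of W <o card_of (fib (N b0)))"
      have all: "\<forall>T\<in>N ` R. |fib T| \<le>o |W|"
      proof
        fix T assume "T \<in> N ` R"
        then have "\<not> |W| <o |fib T|" using nex by blast
        then show "|fib T| \<le>o |W|"
          using not_ordLess_iff_ordLeq[OF card_of_Well_order[of "fib T"] card_of_Well_order[of W]] by blast
      qed
      have sub: "R \<subseteq> (\<Union>T\<in>N ` R. fib T)" unfolding fib_def by blast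
      have 1: "|SIGMA T:N ` R. fib T| \<le>o |N ` R \<times> W|"
        using card_of_Sigma_mono1[of "N ` R" fib "\<lambda>_. W"] all by simp
      have "N ` R \<subseteq> Pow A" using N by blast
      then have "|N ` R| <o |B|" using ordLeq_ordLess_trans[OF card_of_mono1 PowA] by blast
      then have 2: "|N ` R \<times> W| <o |B|" using times_less[OF infB _ Wlt] by blast
      have "|R| <o |B|"
        using ordLeq_ordLess_trans[OF ordLeq_transitive[OF card_of_mono1[OF sub] ordLeq_transitive[OF card_of_UNION_Sigma 1]] 2] .
      then show False using Rnot by blast
    qed
    then obtain b0 where b0: "b0 \<in> R" "|W| <o |fib (N b0)|" by blast
    define T0 where "T0 = N b0"
    define D0 where "D0 = fib (N b0)"
    have T0: "T0 \<subseteq> A - U pc j" "countable T0" "infinite T0" using N b0(1) unfolding T0_def by auto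
    have D0R: "D0 \<subseteq> R" unfolding D0_def fib_def by blast
    have WD0: "|W| <o |D0|" using b0(2) unfolding D0_def .
    have D1: "|underS |B| (g j)| <o |D0|" using ordLeq_ordLess_trans[OF card_of_Plus1 WD0[unfolded W_def]] .
    have D2: "|A| <o |D0|" using ordLeq_ordLess_trans[OF card_of_Plus2 WD0[unfolded W_def]] .
    have D0G: "D0 \<subseteq> G T0"
    proof
      fix b assume b: "b \<in> D0"
      then have "b \<in> R" "N b = T0" unfolding D0_def fib_def T0_def by auto
      then have "T0 \<subseteq> {a\<in>A. (a,b)\<in>E}" using N by blast
      then show "b \<in> G T0" using inG[of b T0] \<open>b \<in> R\<close> T0(3) unfolding R_def by blast
    qed
    have D3: "|D0| <o |B|" using ordLeq_ordLess_trans[OF card_of_mono1[OF D0G] NF[OF _ T0(2,3)]] T0(1) by blast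
    have Tn: "|T0| =o |UNIV::nat set|" using ctbl_eq T0(2,3) by blast
    have TD: "|T0| <o |D0|" using ordLeq_ordLess_trans[OF ordIso_ordLeq_trans[OF Tn natA] D2] .
    have inf0: "\<forall>b\<in>D0. infinite {a\<in>T0. (a, b) \<in> E \<inter> T0 \<times> D0}"
    proof
      fix b assume b: "b \<in> D0"
      then have "b \<in> G T0" using D0G by blast
      moreover have "{a\<in>T0. (a, b) \<in> E \<inter> T0 \<times> D0} = {a\<in>T0. (a,b)\<in>E}" using b by auto
      ultimately show "infinite {a\<in>T0. (a, b) \<in> E \<inter> T0 \<times> D0}" unfolding G_def by simp
    qed
    have sg: "aleph0_subgraph A B E T0 D0"
      unfolding aleph0_subgraph_def lk_graph_def using T0 D0R Tn TD inf0 unfolding R_def by blast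
    have "good pc j (T0, D0)"
      unfolding good_def using T0(1) D0R sg D1 D2 D3 unfolding R_def by auto
    then show ?thesis by blast
  qed
  have allgood: "\<forall>j\<in>cfI. good pc j (pc j)"
  proof
    fix j0 assume "j0 \<in> cfI"
    have "j \<in> cfI \<longrightarrow> good pc j (pc j)" for j
    proof (induction j rule: wo_rel.well_order_induct[OF WO])
      case (1 x)
      show ?case
      proof
        assume x: "x \<in> cfI"
        have "\<forall>i\<in>underS |cfI| x. good pc i (pc i)"
        proof
          fix i assume "i \<in> underS |cfI| x"
          then have "i \<noteq> x" "(i,x) \<in> |cfI|" unfolding underS_def by auto
          then show "good pc i (pc i)" using 1 card_field[of i x cfI] by blast
        qed
        then have "\<exists>p. good pc x p" using ex x by blast
        then have "good pc x (SOME p. good pc x p)" by (rule someI_ex)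
        moreover have "pc x = (SOME p. good pc x p)" by (subst fixp) (simp add: H_def)
        ultimately show "good pc x (pc x)" by simp
      qed
    qed
    then show "good pc j0 (pc j0)" using \<open>j0 \<in> cfI\<close> by blast
  qed
  show ?thesis
  proof (rule disjI2, intro exI conjI)
    show "|cfI| =o |cfI|" by (rule card_of_refl)
    show "\<forall>i\<in>cfI. aleph0_subgraph A B E (fst (pc i)) (snd (pc i))"
      using allgood unfolding good_def by blast
    show "\<forall>i\<in>cfI. \<forall>j\<in>cfI. i \<noteq> j \<longrightarrow> fst (pc i) \<inter> fst (pc j) = {} \<and> snd (pc i) \<inter> snd (pc j) = {}"
    proof (intro ballI impI)
      fix i j assume ij: "i \<in> cfI" "j \<in> cfI" "i \<noteq> j"
      have dis: "fst (pc a) \<inter> fst (pc b) = {} \<and> snd (pc a) \<inter> snd (pc b) = {}"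
        if "a \<in> cfI" "b \<in> cfI" "a \<noteq> b" "(a,b) \<in> |cfI|" for a b
      proof -
        have a: "a \<in> underS |cfI| b" using that unfolding underS_def by auto
        have "fst (pc a) \<subseteq> U pc b" "snd (pc a) \<subseteq> V pc b" unfolding U_def V_def using a by auto
        moreover have "fst (pc b) \<subseteq> A - U pc b" "snd (pc b) \<subseteq> B - V pc b"
          using allgood that unfolding good_def by auto
        ultimately show ?thesis by blast
      qed
      show "fst (pc i) \<inter> fst (pc j) = {} \<and> snd (pc i) \<inter> snd (pc j) = {}"
      proof (cases "(i,j) \<in> |cfI|")
        case True
        then show ?thesis using dis ij by blast
      next
        case False
        then have "(j,i) \<in> |cfI|" using card_total[of i cfI j] ij by blast
        then show ?thesis using dis[of j i] ij by blast
      qed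
    qed
    show "\<forall>X\<subseteq>B. card_of X <o card_of B \<longrightarrow> (\<exists>i\<in>cfI. card_of X <o card_of (snd (pc i)))"
    proof (intro allI impI)
      fix X assume X: "X \<subseteq> B" "|X| <o |B|"
      obtain a where a: "a \<in> B" "|X| \<le>o |underS |B| a|" using below_elem[OF X(2)] by blast
      obtain s where s: "s \<in> S" "(a,s) \<in> |B|" using S(1) a(1) unfolding cofinal_in_def Field_card_of by blast
      obtain j where j: "j \<in> cfI" "s = g j" using g s(1) unfolding bij_betw_def by blast
      have "|X| \<le>o |underS |B| (g j)|"
        using ordLeq_transitive[OF a(2) card_of_mono1[OF underS_mono[OF s(2)]]] j(2) by simp
      moreover have "|underS |B| (g j)| <o |snd (pc j)|" using allgood j(1) unfolding good_def by blast
      ultimately show "\<exists>i\<in>cfI. card_of X <o card_of (snd (pc i))" using j(1) ordLeq_ordLess_trans by blast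
    qed
  qed
qed

end
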